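(* Let $G=(V,E)$ be a finite simple graph and let $s\in[0,1]^{V}$. Then there exists a fort $F$ of $G$ with $\sum_{v\in F}s_v<1$ if and only if every optimal solution $x$ of the integer program $$\text{minimize }\sum_{v\in V}s_vx_v\ \text{ subject to }\ \sum_{v\in V}x_v\geq1,\quad x_u-x_v+\sum_{w\in N(u)\setminus\{v\}}x_w\geq0\ \ \forall v\in V,\ u\in N(v),\quad x\in\{0,1\}^V$$ has objective value less than one.
   Context: $N(u)$ denotes the neighborhood of $u$. A fort of $G$ is a non-empty set $F\subseteq V$ such that no vertex $u\in V\setminus F$ has exactly one neighbor in $F$. *)

theory Defs
  imports Complex_Main
begin

definition simple_graph :: "'a set \<Rightarrow> ('a \<Rightarrow> 'a \<Rightarrow> bool) \<Rightarrow> bool" where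
  "simple_graph V E \<longleftrightarrow> finite V \<and> (\<forall>u v. E u v \<longrightarrow> E v u) \<and> (\<forall>v. \<not> E v v)
     \<and> (\<forall>u v. E u v \<longrightarrow> u \<in> V \<and> v \<in> V)"

definition nbhd :: "'a set \<Rightarrow> ('a \<Rightarrow> 'a \<Rightarrow> bool) \<Rightarrow> 'a \<Rightarrow> 'a set" where
  "nbhd V E u = {w \<in> V. E u w}"

definition is_fort :: "'a set \<Rightarrow> ('a \<Rightarrow> 'a \<Rightarrow> bool) \<Rightarrow> 'a set \<Rightarrow> bool" where
  "is_fort V E F \<longleftrightarrow> F \<noteq> {} \<and> F \<subseteq> V \<and>
     (\<forall>u \<in> V - F. card (nbhd V E u \<inter> F) \<noteq> 1)"

definition ip_feasible :: "'a set \<Rightarrow> ('a \<Rightarrow> 'a \<Rightarrow> bool) \<Rightarrow> ('a \<Rightarrow> real) \<Rightarrow> bool" where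
  "ip_feasible V E x \<longleftrightarrow>
     (\<forall>v \<in> V. x v \<in> {0, 1}) \<and>
     (\<Sum>v\<in>V. x v) \<ge> 1 \<and>
     (\<forall>v \<in> V. \<forall>u \<in> nbhd V E v. x u - x v + (\<Sum>w \<in> nbhd V E u - {v}. x w) \<ge> 0)"

definition ip_obj :: "'a set \<Rightarrow> ('a \<Rightarrow> real) \<Rightarrow> ('a \<Rightarrow> real) \<Rightarrow> real" where
  "ip_obj V s x = (\<Sum>v\<in>V. s v * x v)"

definition ip_optimal :: "'a set \<Rightarrow> ('a \<Rightarrow> 'a \<Rightarrow> bool) \<Rightarrow> ('a \<Rightarrow> real) \<Rightarrow> ('a \<Rightarrow> real) \<Rightarrow> bool" where
  "ip_optimal V E s x \<longleftrightarrow> ip_feasible V E x \<and>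
     (\<forall>y. ip_feasible V E y \<longrightarrow> ip_obj V s x \<le> ip_obj V s y)"

end

theory Submission
  imports Defs
begin

lemma obj_ind:
  assumes "finite V" "\<forall>v\<in>V. x v \<in> {0,1}"
  shows "ip_obj V s x = (\<Sum>v\<in>{v\<in>V. x v = 1}. s v)"
proof -
  have "ip_obj V s x = (\<Sum>v\<in>V. if x v = 1 then s v else 0)"
    unfolding ip_obj_def using assms(2) by (intro sum.cong) auto
  also have "\<dots> = (\<Sum>v\<in>{v\<in>V. x v = 1}. s v)"
    using assms(1) by (simp add: sum.inter_filter)
  finally show ?thesis .
qed

lemma feas_fort:
  assumes g: "simple_graph V E" and f: "ip_feasible V E x"
  shows "is_fort V E {v\<in>V. x v = 1}"
proof -
  let ?F = "{v\<in>V. x v = 1}"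
  have fin: "finite V" using g by (simp add: simple_graph_def)
  have x01: "\<forall>v\<in>V. x v \<in> {0,1}" and s1: "(\<Sum>v\<in>V. x v) \<ge> 1"
    and c: "\<forall>v \<in> V. \<forall>u \<in> nbhd V E v. x u - x v + (\<Sum>w \<in> nbhd V E u - {v}. x w) \<ge> 0"
    using f by (auto simp: ip_feasible_def)
  have ne: "?F \<noteq> {}"
  proof
    assume "?F = {}"
    then have "\<forall>v\<in>V. x v = 0" using x01 by auto
    then have "(\<Sum>v\<in>V. x v) = 0" by simp
    with s1 show False by simp
  qed
  have "card (nbhd V E u \<inter> ?F) \<noteq> 1" if u: "u \<in> V - ?F" for u
  proof
    assume "card (nbhd V E u \<inter> ?F) = 1"
    then obtain v where v: "nbhd V E u \<inter> ?F = {v}" by (auto simp: card_Suc_eq)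
    then have vV: "v \<in> V" and Euv: "E u v" and xv: "x v = 1" by (auto simp: nbhd_def)
    have "E v u" using g Euv by (simp add: simple_graph_def)
    then have un: "u \<in> nbhd V E v" using u by (auto simp: nbhd_def)
    have xu: "x u = 0" using u x01 by auto
    have "(\<Sum>w \<in> nbhd V E u - {v}. x w) = 0"
    proof (rule sum.neutral, rule ballI)
      fix w assume w: "w \<in> nbhd V E u - {v}"
      then have "w \<notin> ?F" using v by blast
      moreover have "w \<in> V" using w by (auto simp: nbhd_def)
      ultimately show "x w = 0" using x01 by auto
    qed
    with c vV un xu xv show False by fastforce
  qed
  then show ?thesis using ne unfolding is_fort_def by blast
qed

lemma fort_feas:
  assumes g: "simple_graph V E" and F: "is_fort V E F"
  shows "ip_feasible V E (\<lambda>v. if v \<in> F then 1 else 0)"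
proof -
  let ?x = "\<lambda>v. if v \<in> F then 1 else (0::real)"
  have fin: "finite V" using g by (simp add: simple_graph_def)
  have ne: "F \<noteq> {}" and sub: "F \<subseteq> V" and fc: "\<forall>u \<in> V - F. card (nbhd V E u \<inter> F) \<noteq> 1"
    using F by (auto simp: is_fort_def)
  have finF: "finite F" using fin sub finite_subset by blast
  have "(\<Sum>v\<in>V. ?x v) = (\<Sum>v\<in>F. 1)"
    using fin sub by (simp add: sum.If_cases Int_absorb1)
  also have "\<dots> = real (card F)" by simp
  finally have s1: "(\<Sum>v\<in>V. ?x v) \<ge> 1" using ne finF
    by (simp add: Suc_leI card_gt_0_iff)
  have "?x u - ?x v + (\<Sum>w \<in> nbhd V E u - {v}. ?x w) \<ge> 0"
    if vV: "v \<in> V" and un: "u \<in> nbhd V E v" for u v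
  proof -
    have nn: "(\<Sum>w \<in> nbhd V E u - {v}. ?x w) \<ge> 0" by (simp add: sum_nonneg)
    show ?thesis
    proof (cases "u \<in> F \<or> v \<notin> F")
      case True then show ?thesis using nn by auto
    next
      case False
      then have uF: "u \<notin> F" and vF: "v \<in> F" by auto
      have uV: "u \<in> V" and Evu: "E v u" using un by (auto simp: nbhd_def)
      have "E u v" using g Evu by (simp add: simple_graph_def)
      then have vin: "v \<in> nbhd V E u \<inter> F" using vV vF by (auto simp: nbhd_def)
      have finN: "finite (nbhd V E u \<inter> F)" using finF by simp
      have "card (nbhd V E u \<inter> F) \<noteq> 1" using fc uV uF by auto
      moreover have "card (nbhd V E u \<inter> F) \<noteq> 0" using finN vin by auto
      ultimately have "card (nbhd V E u \<inter> F) \<ge> 2" by linarith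
      then have "\<exists>w \<in> nbhd V E u \<inter> F. w \<noteq> v"
        using vin by (metis card_le_Suc0_iff_eq not_less_eq_eq numeral_2_eq_2 finN)
      then obtain w where w: "w \<in> nbhd V E u \<inter> F" "w \<noteq> v" by blast
      have finN2: "finite (nbhd V E u - {v})" using fin by (simp add: nbhd_def)
      have "?x w \<le> (\<Sum>w \<in> nbhd V E u - {v}. ?x w)"
        by (rule member_le_sum) (use w finN2 in auto)
      then have "(\<Sum>w \<in> nbhd V E u - {v}. ?x w) \<ge> 1" using w by simp
      then show ?thesis using uF vF by simp
    qed
  qed
  then show ?thesis unfolding ip_feasible_def using s1 by auto
qed

theorem theorem5p6:
  fixes V :: "'a set" and E :: "'a \<Rightarrow> 'a \<Rightarrow> bool" and s :: "'a \<Rightarrow> real"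
  assumes "simple_graph V E" and "V \<noteq> {}"
    and "\<forall>v \<in> V. 0 \<le> s v \<and> s v \<le> 1"
  shows "(\<exists>F. is_fort V E F \<and> (\<Sum>v\<in>F. s v) < 1) \<longleftrightarrow>
         (\<forall>x. ip_optimal V E s x \<longrightarrow> ip_obj V s x < 1)"
proof -
  have fin: "finite V" using assms(1) by (simp add: simple_graph_def)
  have objF: "ip_obj V s (\<lambda>v. if v \<in> F then 1 else 0) = (\<Sum>v\<in>F. s v)"
    if "is_fort V E F" for F
  proof -
    have "F \<subseteq> V" using that by (simp add: is_fort_def)
    then have "{v\<in>V. (if v \<in> F then 1 else (0::real)) = 1} = F" by auto
    then show ?thesis using obj_ind[OF fin, of "\<lambda>v. if v \<in> F then 1 else 0" s] by simp
  qed
  have objx: "ip_obj V s x = (\<Sum>v\<in>{v\<in>V. x v = 1}. s v)" if "ip_feasible V E x" for x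
    using obj_ind[OF fin] that by (simp add: ip_feasible_def)
  show ?thesis
  proof
    assume "\<exists>F. is_fort V E F \<and> (\<Sum>v\<in>F. s v) < 1"
    then obtain F where F: "is_fort V E F" "(\<Sum>v\<in>F. s v) < 1" by blast
    show "\<forall>x. ip_optimal V E s x \<longrightarrow> ip_obj V s x < 1"
    proof (intro allI impI)
      fix x assume "ip_optimal V E s x"
      then have "ip_obj V s x \<le> ip_obj V s (\<lambda>v. if v \<in> F then 1 else 0)"
        using fort_feas[OF assms(1) F(1)] by (simp add: ip_optimal_def)
      then show "ip_obj V s x < 1" using objF[OF F(1)] F(2) by simp
    qed
  next
    assume H: "\<forall>x. ip_optimal V E s x \<longrightarrow> ip_obj V s x < 1"
    let ?S = "{F. F \<subseteq> V \<and> is_fort V E F}"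
    have finS: "finite ?S" using fin by simp
    have VS: "V \<in> ?S" using assms(2) by (auto simp: is_fort_def)
    obtain F0 where F0: "F0 \<in> ?S" "\<forall>F\<in>?S. (\<Sum>v\<in>F0. s v) \<le> (\<Sum>v\<in>F. s v)"
    proof -
      have "finite ((\<lambda>F. \<Sum>v\<in>F. s v) ` ?S)" using finS by simp
      moreover have "(\<lambda>F. \<Sum>v\<in>F. s v) ` ?S \<noteq> {}" using VS by blast
      ultimately obtain m where m: "m \<in> (\<lambda>F. \<Sum>v\<in>F. s v) ` ?S"
        "\<forall>y\<in>(\<lambda>F. \<Sum>v\<in>F. s v) ` ?S. m \<le> y"
        using Min_in Min_le by metis
      then show ?thesis using that by blast
    qed
    have fortF0: "is_fort V E F0" using F0 by simp
    have "ip_optimal V E s (\<lambda>v. if v \<in> F0 then 1 else 0)"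
      unfolding ip_optimal_def
    proof (intro conjI allI impI)
      show "ip_feasible V E (\<lambda>v. if v \<in> F0 then 1 else 0)" by (rule fort_feas[OF assms(1) fortF0])
    next
      fix y assume y: "ip_feasible V E y"
      have "{v\<in>V. y v = 1} \<in> ?S" using feas_fort[OF assms(1) y] by auto
      then show "ip_obj V s (\<lambda>v. if v \<in> F0 then 1 else 0) \<le> ip_obj V s y"
        using F0(2) objF[OF fortF0] objx[OF y] by auto
    qed
    then have "(\<Sum>v\<in>F0. s v) < 1" using H objF[OF fortF0] by auto
    then show "\<exists>F. is_fort V E F \<and> (\<Sum>v\<in>F. s v) < 1" using fortF0 by blast
  qed
qed

end
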